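(* Let $r\ge 10$ be an even integer, let $k\ge 1$, and let $Q\subseteq\mathrm{VE}(G_k)$ be such that $\mu_1\notin\mathrm{VE}(G_{2r+1}(\mu_2))$ for all distinct $\mu_1,\mu_2\in Q$. Then for every $\mu\in\mathrm{VE}(G_k)$, \[ \bigl|\{\mu_1\in Q:\mu\in\mathrm{VE}(G_{3r+1}(\mu_1))\}\bigr|\le 16. \]
   Context: The grid $G_k$ has vertex set $\{1,\dots,k\}^2$, with $(i_1,j_1)$ and $(i_2,j_2)$ adjacent iff $|i_1-i_2|+|j_1-j_2|=1$. For a graph $H$, $\mathrm{VE}(H):=V(H)\cup E(H)$. For a vertex $v=(i,j)$ of $G_k$ and integer $s\ge 0$, $B_s(v):=(\{i-s,\dots,i+s\}\times\{j-s,\dots,j+s\})\cap V(G_k)$; for an edge $vw$ of $G_k$, $B_s(vw):=B_s(v)\cup B_s(w)$; and $G_s(\mu):=G_k[B_s(\mu)]$ is the induced subgraph, for $\mu\in\mathrm{VE}(G_k)$. *)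

theory Defs
  imports Main
begin

type_synonym vtx = "int \<times> int"

text \<open>Elements of VE(H): either a vertex or an edge (an unordered pair of vertices).\<close>
datatype ve = Vx vtx | Ed "vtx set"

definition grid_V :: "nat \<Rightarrow> vtx set" where
  "grid_V k = {1..int k} \<times> {1..int k}"

definition adj :: "vtx \<Rightarrow> vtx \<Rightarrow> bool" where
  "adj v w \<longleftrightarrow> \<bar>fst v - fst w\<bar> + \<bar>snd v - snd w\<bar> = 1"

definition grid_E_on :: "nat \<Rightarrow> vtx set \<Rightarrow> vtx set set" where
  "grid_E_on k S = {{v, w} | v w. v \<in> S \<inter> grid_V k \<and> w \<in> S \<inter> grid_V k \<and> adj v w}"

definition VE_on :: "nat \<Rightarrow> vtx set \<Rightarrow> ve set" where
  "VE_on k S = Vx ` (S \<inter> grid_V k) \<union> Ed ` grid_E_on k S"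

definition VE_grid :: "nat \<Rightarrow> ve set" where
  "VE_grid k = VE_on k (grid_V k)"

definition ball_v :: "nat \<Rightarrow> nat \<Rightarrow> vtx \<Rightarrow> vtx set" where
  "ball_v k s v = ({fst v - int s..fst v + int s} \<times> {snd v - int s..snd v + int s}) \<inter> grid_V k"

fun ball_ve :: "nat \<Rightarrow> nat \<Rightarrow> ve \<Rightarrow> vtx set" where
  "ball_ve k s (Vx v) = ball_v k s v"
| "ball_ve k s (Ed e) = (\<Union>v\<in>e. ball_v k s v)"

definition VE_G :: "nat \<Rightarrow> nat \<Rightarrow> ve \<Rightarrow> ve set" where
  "VE_G k s \<mu> = VE_on k (ball_ve k s \<mu>)"

end

theory Submission
  imports Defs
begin

definition cheb :: "vtx \<Rightarrow> vtx \<Rightarrow> int" where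
  "cheb a b = max \<bar>fst a - fst b\<bar> \<bar>snd a - snd b\<bar>"

fun verts :: "ve \<Rightarrow> vtx set" where
  "verts (Vx v) = {v}"
| "verts (Ed e) = e"

definition rep :: "ve \<Rightarrow> vtx" where
  "rep m = (SOME v. v \<in> verts m)"

lemma cheb_sym: "cheb a b = cheb b a"
  unfolding cheb_def by auto

lemma cheb_tri: "cheb a c \<le> cheb a b + cheb b c"
  unfolding cheb_def by auto

lemma ve_props:
  assumes "m \<in> VE_grid k"
  shows "verts m \<noteq> {} \<and> verts m \<subseteq> grid_V k \<and> (\<forall>a\<in>verts m. \<forall>b\<in>verts m. cheb a b \<le> 1)"
  using assms unfolding VE_grid_def VE_on_def grid_E_on_def
  by (auto simp: cheb_def adj_def)

lemma ve_mem:
  assumes "m \<in> VE_grid k"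
  shows "m \<in> VE_on k S \<longleftrightarrow> verts m \<subseteq> S"
proof (cases m)
  case (Vx v)
  then show ?thesis using assms unfolding VE_grid_def VE_on_def by auto
next
  case (Ed e)
  from assms Ed obtain v w where e: "e = {v,w}" "v \<in> grid_V k" "w \<in> grid_V k" "adj v w"
    unfolding VE_grid_def VE_on_def grid_E_on_def by auto
  show ?thesis
  proof
    assume "m \<in> VE_on k S"
    then have "e \<in> grid_E_on k S" using Ed unfolding VE_on_def by auto
    then show "verts m \<subseteq> S" using Ed unfolding grid_E_on_def by auto
  next
    assume "verts m \<subseteq> S"
    then have "v \<in> S \<inter> grid_V k \<and> w \<in> S \<inter> grid_V k \<and> adj v w" using Ed e by auto
    then have "{v,w} \<in> grid_E_on k S" unfolding grid_E_on_def by blast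
    then have "e \<in> grid_E_on k S" using e by simp
    then show "m \<in> VE_on k S" using Ed unfolding VE_on_def by auto
  qed
qed

lemma ballv_mem:
  "y \<in> ball_v k s v \<longleftrightarrow> y \<in> grid_V k \<and> cheb y v \<le> int s"
  by (cases y; cases v) (auto simp: ball_v_def cheb_def)

lemma ball_mem:
  "y \<in> ball_ve k s m \<longleftrightarrow> y \<in> grid_V k \<and> (\<exists>v\<in>verts m. cheb y v \<le> int s)"
  by (cases m) (auto simp: ballv_mem)

lemma rep_in: "m \<in> VE_grid k \<Longrightarrow> rep m \<in> verts m"
  unfolding rep_def using ve_props by (meson ex_in_conv someI_ex)

lemma L1:
  assumes "m1 \<in> VE_grid k" "m2 \<in> VE_grid k" "m1 \<notin> VE_G k s m2"
  shows "int s \<le> cheb (rep m1) (rep m2)"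
proof -
  have "\<not> verts m1 \<subseteq> ball_ve k s m2"
    using assms ve_mem unfolding VE_G_def by blast
  then obtain a where a: "a \<in> verts m1" "a \<notin> ball_ve k s m2" by blast
  have "a \<in> grid_V k" using a ve_props[OF assms(1)] by auto
  then have "cheb a (rep m2) > int s" using a(2) rep_in[OF assms(2)] ball_mem by fastforce
  moreover have "cheb a (rep m1) \<le> 1" using a rep_in[OF assms(1)] ve_props[OF assms(1)] by blast
  moreover have "cheb a (rep m2) \<le> cheb a (rep m1) + cheb (rep m1) (rep m2)" by (rule cheb_tri)
  ultimately show ?thesis by linarith
qed

lemma L2:
  assumes "m \<in> VE_grid k" "m1 \<in> VE_grid k" "m \<in> VE_G k s m1"
  shows "cheb (rep m) (rep m1) \<le> int s + 1"
proof -
  have "verts m \<subseteq> ball_ve k s m1" using assms ve_mem unfolding VE_G_def by blast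
  then have "rep m \<in> ball_ve k s m1" using rep_in[OF assms(1)] by blast
  then obtain v where v: "v \<in> verts m1" "cheb (rep m) v \<le> int s" using ball_mem by blast
  have "cheb v (rep m1) \<le> 1" using v rep_in[OF assms(2)] ve_props[OF assms(2)] by blast
  moreover have "cheb (rep m) (rep m1) \<le> cheb (rep m) v + cheb v (rep m1)" by (rule cheb_tri)
  ultimately show ?thesis using v by linarith
qed

lemma div_close:
  fixes a b D :: int
  assumes "0 < D" "a div D = b div D"
  shows "\<bar>a - b\<bar> < D"
proof -
  obtain q where q: "q = a div D" by blast
  have ea: "a = D * q + a mod D" unfolding q by simp
  have eb: "b = D * q + b mod D" unfolding q assms(2) by simp
  have "0 \<le> a mod D" "a mod D < D" "0 \<le> b mod D" "b mod D < D"
    using assms by simp_all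
  then have "a - b = a mod D - b mod D" "a mod D - b mod D < D" "b mod D - a mod D < D" using ea eb by linarith+
  then show ?thesis by linarith
qed

lemma div_range:
  fixes a D :: int
  assumes "0 < D" "0 \<le> a" "a < 4 * D"
  shows "a div D \<in> {0..3}"
proof -
  have "0 \<le> a div D" using assms by (simp add: pos_imp_zdiv_nonneg_iff)
  moreover have "a div D < 4"
  proof (rule ccontr)
    assume "\<not> a div D < 4"
    then have "D * 4 \<le> D * (a div D)" using assms(1) by (intro mult_left_mono) auto
    moreover have "a = D * (a div D) + a mod D" by simp
    moreover have "0 \<le> a mod D" using assms(1) by simp
    ultimately show False using assms(3) by linarith
  qed
  ultimately show ?thesis by auto
qed

theorem lemma13:
  fixes r k :: nat and Q :: "ve set" and \<mu> :: ve
  assumes "r \<ge> 10" and "even r" and "k \<ge> 1"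
    and "Q \<subseteq> VE_grid k"
    and "\<forall>\<mu>1\<in>Q. \<forall>\<mu>2\<in>Q. \<mu>1 \<noteq> \<mu>2 \<longrightarrow> \<mu>1 \<notin> VE_G k (2*r+1) \<mu>2"
    and "\<mu> \<in> VE_grid k"
  shows "card {\<mu>1 \<in> Q. \<mu> \<in> VE_G k (3*r+1) \<mu>1} \<le> 16"
proof -
  define A where "A = {\<mu>1 \<in> Q. \<mu> \<in> VE_G k (3*r+1) \<mu>1}"
  define x where "x = rep \<mu>"
  define R :: int where "R = 3 * int r + 2"
  define D :: int where "D = 2 * int r + 1"
  define f where "f = (\<lambda>m. ((fst (rep m) - fst x + R) div D, (snd (rep m) - snd x + R) div D))"
  have D0: "0 < D" unfolding D_def by simp
  have close: "cheb x (rep m) \<le> R" if "m \<in> A" for m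
    using L2[OF assms(6), of m "3*r+1"] that assms(4) unfolding A_def x_def R_def by auto
  have far: "D \<le> cheb (rep m1) (rep m2)" if "m1 \<in> A" "m2 \<in> A" "m1 \<noteq> m2" for m1 m2
    using L1[of m1 k m2 "2*r+1"] that assms(4,5) unfolding A_def D_def by (auto simp: add.commute subset_iff)
  have inj: "inj_on f A"
  proof (rule inj_onI)
    fix m1 m2 assume h: "m1 \<in> A" "m2 \<in> A" "f m1 = f m2"
    show "m1 = m2"
    proof (rule ccontr)
      assume "m1 \<noteq> m2"
      then have "D \<le> cheb (rep m1) (rep m2)" using far h by blast
      moreover have "\<bar>(fst (rep m1) - fst x + R) - (fst (rep m2) - fst x + R)\<bar> < D"
        by (rule div_close[OF D0]) (use h(3) in \<open>simp add: f_def\<close>)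
      moreover have "\<bar>(snd (rep m1) - snd x + R) - (snd (rep m2) - snd x + R)\<bar> < D"
        by (rule div_close[OF D0]) (use h(3) in \<open>simp add: f_def\<close>)
      ultimately show False unfolding cheb_def by auto
    qed
  qed
  have img: "f ` A \<subseteq> {0..3} \<times> {0..3}"
  proof
    fix y assume "y \<in> f ` A"
    then obtain m where m: "m \<in> A" "y = f m" by blast
    have c: "cheb x (rep m) \<le> R" using close m(1) .
    have RD: "2 * R < 4 * D" using assms(1) unfolding R_def D_def by simp
    have "(fst (rep m) - fst x + R) div D \<in> {0..3}"
      by (rule div_range[OF D0]) (use c RD in \<open>auto simp: cheb_def\<close>)
    moreover have "(snd (rep m) - snd x + R) div D \<in> {0..3}"
      by (rule div_range[OF D0]) (use c RD in \<open>auto simp: cheb_def\<close>)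
    ultimately show "y \<in> {0..3} \<times> {0..3}" using m(2) unfolding f_def by auto
  qed
  have "card A \<le> card ({0..3::int} \<times> {0..3::int})"
    by (rule card_inj_on_le[OF inj img]) simp
  also have "\<dots> = 16" by simp
  finally show ?thesis unfolding A_def .
qed

end
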